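(* Let $X$ be a finite connected simplicial complex and $\delta$ a cellular perversity. (1) The left quadratic dual of the quadratic algebra $A(X,\delta)$ is isomorphic to $B(X,-\delta)$. (2) The left quadratic dual of $B(X,\delta)$ is isomorphic to $A(X,-\delta)$.
   Context: Simplices are open; $\Delta\leftrightarrow\Delta'$ means one is a face of the other. Cellular perversity: $\delta:\mathbb Z_{\ge0}\to\mathbb Z$, $\delta(0)=0$, bijective from each $\{0,\dots,k\}$ onto an interval $\{a,\dots,a+k\}$, $a\le0$ (then $-\delta$ is also one); $\delta(\Delta)=\delta(\dim\Delta)$. For a cellular perversity $\varepsilon$, the quiver $Q(X,\varepsilon)$ has vertices the simplices and an arrow $\Delta\to\Delta'$ whenever $\Delta\leftrightarrow\Delta'$ and $\varepsilon(\Delta)=\varepsilon(\Delta')+1$ (so $Q(X,-\delta)$ is $Q(X,\delta)$ with arrows reversed). In the path algebra over a field $\mathbb F$ (char $0$), products $xy$ mean path $y$ followed by $x$. $A(X,\varepsilon)$ is the quotient by the relations $\sum_{\Delta:\varepsilon(\Delta)=k,\ \Delta'\leftrightarrow\Delta\leftrightarrow\Delta''}a(\Delta,\Delta'')a(\Delta',\Delta)=0$ for all $\Delta',\Delta''$ with $\varepsilon(\Delta')=k+1$, $\varepsilon(\Delta'')=k-1$; $B(X,\varepsilon)$ is the quotient by $b(\Delta_1,\Delta'')b(\Delta',\Delta_1)=b(\Delta_2,\Delta'')b(\Delta',\Delta_2)$ whenever $\varepsilon(\Delta')=k+1$, $\varepsilon(\Delta_j)=k$, $\varepsilon(\Delta'')=k-1$,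 $\Delta'\leftrightarrow\Delta_j\leftrightarrow\Delta''$. Both are quadratic algebras over the semisimple algebra $k=\bigoplus_\Delta\mathbb F e(\Delta)$; the left quadratic dual of $T_k(V)/(R)$, $R\subseteq V\otimes_kV$, is $T_k(V^* )/(R^\perp)$ (in the sense of Beilinson–Ginzburg–Soergel). *)

theory Defs
  imports "HOL-Algebra.QuotRing"
begin

definition simplicial_complex :: "'v set set \<Rightarrow> bool" where
  "simplicial_complex X \<longleftrightarrow>
     (\<forall>D\<in>X. finite D \<and> D \<noteq> {}) \<and> (\<forall>D\<in>X. \<forall>G. G \<subseteq> D \<and> G \<noteq> {} \<longrightarrow> G \<in> X)"

text \<open>Connectedness (of the geometric realisation) = connectedness of the 1-skeleton.\<close>
definition sc_connected :: "'v set set \<Rightarrow> bool" where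
  "sc_connected X \<longleftrightarrow>
     (\<forall>u\<in>\<Union>X. \<forall>w\<in>\<Union>X. (u, w) \<in> {(x, y). {x, y} \<in> X}\<^sup>*)"

definition sdim :: "'v set \<Rightarrow> nat" where
  "sdim D = card D - 1"

definition incid :: "'v set \<Rightarrow> 'v set \<Rightarrow> bool" where
  "incid D D' \<longleftrightarrow> D \<subset> D' \<or> D' \<subset> D"

definition cellular_perversity :: "(nat \<Rightarrow> int) \<Rightarrow> bool" where
  "cellular_perversity d \<longleftrightarrow>
     d 0 = 0 \<and> (\<forall>k. \<exists>a\<le>0. bij_betw d {0..k} {a..a + int k})"

text \<open>A quiver with at most one arrow between two vertices is given by a vertex set S and
an arrow relation E (pairs (source, target)).  A path is the nonempty list of its vertices;
the trivial path [v] is the idempotent e(v).  Quadratic data: (S, E, R) with R a set of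
(spanning) relations, elements of the path algebra of degree 2.\<close>

type_synonym ('s, 'a) qdata = "'s set \<times> ('s \<times> 's) set \<times> ('s list \<Rightarrow> 'a) set"

definition qpaths :: "'s set \<Rightarrow> ('s \<times> 's) set \<Rightarrow> 's list set" where
  "qpaths S E = {p. p \<noteq> [] \<and> set p \<subseteq> S \<and>
                    (\<forall>i. Suc i < length p \<longrightarrow> (p ! i, p ! Suc i) \<in> E)}"

text \<open>Path algebra over the field 'a: finitely supported functions on paths.
Product x * y = "path of y followed by path of x".\<close>
definition path_ring :: "'s set \<Rightarrow> ('s \<times> 's) set \<Rightarrow> ('s list \<Rightarrow> 'a::field) ring" where
  "path_ring S E =
    \<lparr>carrier = {f. finite {p. f p \<noteq> 0} \<and> {p. f p \<noteq> 0} \<subseteq> qpaths S E},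
     mult = (\<lambda>x y p. if p \<in> qpaths S E
                     then (\<Sum>i<length p. y (take (Suc i) p) * x (drop i p)) else 0),
     one = (\<lambda>p. if (\<exists>v\<in>S. p = [v]) then 1 else 0),
     zero = (\<lambda>p. 0),
     add = (\<lambda>x y p. x p + y p)\<rparr>"

definition qring :: "('s, 'a::field) qdata \<Rightarrow> ('s list \<Rightarrow> 'a) ring" where
  "qring D = (case D of (S, E, R) \<Rightarrow> path_ring S E)"

definition qideal :: "('s, 'a::field) qdata \<Rightarrow> ('s list \<Rightarrow> 'a) set" where
  "qideal D = genideal (qring D) (snd (snd D))"

definition qalg :: "('s, 'a::field) qdata \<Rightarrow> ('s list \<Rightarrow> 'a) set ring" where
  "qalg D = qring D Quot qideal D"

definition qcls :: "('s, 'a::field) qdata \<Rightarrow> ('s list \<Rightarrow> 'a) \<Rightarrow> ('s list \<Rightarrow> 'a) set" where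
  "qcls D x = a_r_coset (qring D) (qideal D) x"

definition scal_idem :: "'a::field \<Rightarrow> 's \<Rightarrow> ('s list \<Rightarrow> 'a)" where
  "scal_idem c v = (\<lambda>p. if p = [v] then c else 0)"

definition qhomog :: "('s, 'a::field) qdata \<Rightarrow> nat \<Rightarrow> ('s list \<Rightarrow> 'a) set set" where
  "qhomog D n = {qcls D x | x. x \<in> carrier (qring D) \<and> (\<forall>p. x p \<noteq> 0 \<longrightarrow> length p = Suc n)}"

text \<open>Isomorphism of graded quadratic algebras over k = (sum of F e(v)):
a ring isomorphism which is k-linear (fixes all c e(v)) and preserves the grading.\<close>
definition qiso :: "('s, 'a::field) qdata \<Rightarrow> ('s, 'a) qdata \<Rightarrow> bool" where
  "qiso D1 D2 \<longleftrightarrow> fst D1 = fst D2 \<and>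
     (\<exists>\<phi>. \<phi> \<in> ring_iso (qalg D1) (qalg D2) \<and>
          (\<forall>c. \<forall>v\<in>fst D1. \<phi> (qcls D1 (scal_idem c v)) = qcls D2 (scal_idem c v)) \<and>
          (\<forall>n. \<phi> ` qhomog D1 n = qhomog D2 n))"

text \<open>Left quadratic dual T_k(V^*)/(R^\<bottom>): V^* is spanned by the dual arrows, i.e. the arrows
of the opposite quiver; the dual basis element of the path [a,b,c] in E is the reversed
path [c,b,a] in the opposite quiver, and R^\<bottom> is the orthogonal of R in degree 2.\<close>
definition ldual :: "('s, 'a::field) qdata \<Rightarrow> ('s, 'a) qdata" where
  "ldual D = (case D of (S, E, R) \<Rightarrow>
     (S, E\<inverse>,
      {s \<in> carrier (path_ring S (E\<inverse>)). (\<forall>p. s p \<noteq> 0 \<longrightarrow> length p = 3) \<and>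
         (\<forall>r\<in>R. (\<Sum>p\<in>{p \<in> qpaths S E. length p = 3}. s (rev p) * r p) = 0)}))"

definition pquiver :: "'v set set \<Rightarrow> (nat \<Rightarrow> int) \<Rightarrow> ('v set \<times> 'v set) set" where
  "pquiver X e = {(D, D'). D \<in> X \<and> D' \<in> X \<and> incid D D' \<and> e (sdim D) = e (sdim D') + 1}"

definition A_rel :: "'v set set \<Rightarrow> (nat \<Rightarrow> int) \<Rightarrow> 'v set \<Rightarrow> 'v set \<Rightarrow> ('v set list \<Rightarrow> 'a::field)" where
  "A_rel X e D' D'' = (\<lambda>p. if p \<in> {[D', D, D''] | D. D \<in> X \<and> e (sdim D) = e (sdim D'') + 1 \<and>
                                     incid D' D \<and> incid D D''} then 1 else 0)"

definition A_data :: "'v set set \<Rightarrow> (nat \<Rightarrow> int) \<Rightarrow> ('v set, 'a::field) qdata" where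
  "A_data X e = (X, pquiver X e,
     {A_rel X e D' D'' | D' D''. D' \<in> X \<and> D'' \<in> X \<and> e (sdim D') = e (sdim D'') + 2})"

definition B_data :: "'v set set \<Rightarrow> (nat \<Rightarrow> int) \<Rightarrow> ('v set, 'a::field) qdata" where
  "B_data X e = (X, pquiver X e,
     {(\<lambda>p. (if p = [D', D1, D''] then 1 else 0) - (if p = [D', D2, D''] then 1 else 0))
       | D' D1 D2 D''. D' \<in> X \<and> D1 \<in> X \<and> D2 \<in> X \<and> D'' \<in> X \<and>
          e (sdim D1) = e (sdim D'') + 1 \<and> e (sdim D2) = e (sdim D'') + 1 \<and>
          e (sdim D') = e (sdim D'') + 2 \<and>
          incid D' D1 \<and> incid D1 D'' \<and> incid D' D2 \<and> incid D2 D''})"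

end

theory Submission
  imports Defs
begin

definition scal :: "'s set \<Rightarrow> 'a::field \<Rightarrow> 's list \<Rightarrow> 'a" where
  "scal S c = (\<lambda>p. if (\<exists>v\<in>S. p = [v]) then c else 0)"

lemma scal_carrier:
  assumes "finite S" shows "scal S c \<in> carrier (path_ring S F)"
proof -
  have "{p. scal S c p \<noteq> 0} \<subseteq> (\<lambda>v. [v]) ` S" by (auto simp: scal_def split: if_splits)
  hence "finite {p. scal S c p \<noteq> 0}" using assms finite_subset by blast
  moreover have "{p. scal S c p \<noteq> 0} \<subseteq> qpaths S F"
    by (auto simp: scal_def qpaths_def split: if_splits)
  ultimately show ?thesis by (simp add: path_ring_def)
qed

lemma mult_scal:
  assumes g: "g \<in> carrier (path_ring S F)"
  shows "g \<otimes>\<^bsub>path_ring S F\<^esub> scal S c = (\<lambda>p. c * g p)"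
proof
  fix p
  show "(g \<otimes>\<^bsub>path_ring S F\<^esub> scal S c) p = c * g p"
  proof (cases "p \<in> qpaths S F")
    case True
    hence ne: "p \<noteq> []" and hd: "hd p \<in> S" by (auto simp: qpaths_def)
    have "\<And>i. i < length p \<Longrightarrow> scal S c (take (Suc i) p) * g (drop i p) = (if i = 0 then c * g p else 0)"
    proof -
      fix i assume i: "i < length p"
      show "scal S c (take (Suc i) p) * g (drop i p) = (if i = 0 then c * g p else 0)"
      proof (cases "i = 0")
        case True
        have "take (Suc 0) p = [hd p]" using ne by (cases p) auto
        then show ?thesis using True hd by (simp add: scal_def)
      next
        case False
        have "length (take (Suc i) p) \<ge> 2" using False i by simp
        have "\<not> (\<exists>v\<in>S. take (Suc i) p = [v])"
        proof
          assume "\<exists>v\<in>S. take (Suc i) p = [v]"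
          then obtain v where "take (Suc i) p = [v]" by blast
          hence "length (take (Suc i) p) = 1" by simp
          with \<open>length (take (Suc i) p) \<ge> 2\<close> show False by linarith
        qed
        then show ?thesis using False by (simp add: scal_def)
      qed
    qed
    hence "(\<Sum>i<length p. scal S c (take (Suc i) p) * g (drop i p)) = (\<Sum>i<length p. (if i = 0 then c * g p else 0))"
      by (intro sum.cong) auto
    also have "\<dots> = c * g p" using ne by (simp add: sum.delta)
    finally show ?thesis using True by (simp add: path_ring_def)
  next
    case False
    hence "g p = 0" using g by (auto simp: path_ring_def)
    then show ?thesis using False by (simp add: path_ring_def)
  qed
qed

lemma genideal_eq_by_reduction:
  fixes Rp G :: "('s list \<Rightarrow> 'a::field) set"
  assumes finS: "finite S"
  and Rp_carr: "Rp \<subseteq> carrier (path_ring S F)"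
  and GRp: "G \<subseteq> Rp"
  and step: "\<And>s. s \<in> Rp \<Longrightarrow> s \<noteq> (\<lambda>p. 0) \<Longrightarrow> \<exists>c g. g \<in> G \<and> (\<lambda>p. s p - c * g p) \<in> Rp \<and>
                 {p. s p - c * g p \<noteq> 0} \<subset> {p. s p \<noteq> 0}"
  shows "genideal (path_ring S F) Rp = genideal (path_ring S F) G"
proof -
  have key: "Rp \<subseteq> I" if I: "ideal I (path_ring S F)" and GI: "G \<subseteq> I" for I
  proof -
    interpret ideal I "path_ring S F" by (rule I)
    have "\<forall>s. s \<in> Rp \<longrightarrow> card {p. s p \<noteq> 0} = n \<longrightarrow> s \<in> I" for n
    proof (induction n rule: less_induct)
      case (less n)
      show ?case
      proof (intro allI impI)
        fix s assume s: "s \<in> Rp" and cn: "card {p. s p \<noteq> 0} = n"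
        show "s \<in> I"
        proof (cases "s = (\<lambda>p. 0)")
          case True
          have "\<zero>\<^bsub>path_ring S F\<^esub> \<in> I" using additive_subgroup.zero_closed[OF ideal.axioms(1)[OF I]] .
          then show ?thesis using True by (simp add: path_ring_def)
        next
          case False
          then obtain c g where g: "g \<in> G" and s': "(\<lambda>p. s p - c * g p) \<in> Rp"
            and sub: "{p. s p - c * g p \<noteq> 0} \<subset> {p. s p \<noteq> 0}" using step[OF s] by blast
          have fin: "finite {p. s p \<noteq> 0}" using s Rp_carr by (auto simp: path_ring_def)
          have "card {p. s p - c * g p \<noteq> 0} < n" using psubset_card_mono[OF fin sub] cn by simp
          hence I1: "(\<lambda>p. s p - c * g p) \<in> I" using less.IH s' by auto
          have gc: "g \<in> carrier (path_ring S F)" using g GRp Rp_carr by blast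
          have "g \<otimes>\<^bsub>path_ring S F\<^esub> scal S c \<in> I"
            using I_r_closed g GI scal_carrier[OF finS] by blast
          hence I2: "(\<lambda>p. c * g p) \<in> I" using mult_scal[OF gc] by simp
          have "(\<lambda>p. s p - c * g p) \<oplus>\<^bsub>path_ring S F\<^esub> (\<lambda>p. c * g p) \<in> I"
            using additive_subgroup.a_closed[OF ideal.axioms(1)[OF I] I1 I2] .
          moreover have "(\<lambda>p. s p - c * g p) \<oplus>\<^bsub>path_ring S F\<^esub> (\<lambda>p. c * g p) = s"
            by (simp add: path_ring_def)
          ultimately show "s \<in> I" by simp
        qed
      qed
    qed
    then show ?thesis by blast
  qed
  show ?thesis unfolding genideal_def
    using key GRp by (intro arg_cong[where f=Inter]) blast
qed

lemma qiso_of_eq: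
  assumes "fst D1 = fst D2" "qring D1 = qring D2" "qideal D1 = qideal D2"
  shows "qiso D1 D2"
proof -
  have a: "qalg D1 = qalg D2" using assms by (simp add: qalg_def)
  have c: "qcls D1 = qcls D2" using assms by (simp add: qcls_def fun_eq_iff)
  have h: "qhomog D1 = qhomog D2" using assms c by (simp add: qhomog_def fun_eq_iff)
  have "id \<in> ring_iso (qalg D1) (qalg D2)"
    using a by (simp add: ring_iso_def ring_hom_def bij_betw_def)
  then show ?thesis unfolding qiso_def using assms(1) c h
    by (intro conjI exI[of _ id]) auto
qed

lemma qpaths3: "[a,b,c] \<in> qpaths S F \<longleftrightarrow> a \<in> S \<and> b \<in> S \<and> c \<in> S \<and> (a,b) \<in> F \<and> (b,c) \<in> F"
proof
  assume h: "[a,b,c] \<in> qpaths S F"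
  then have H: "\<forall>i. Suc i < length [a,b,c] \<longrightarrow> ([a,b,c]!i, [a,b,c]!Suc i) \<in> F"
    and "set [a,b,c] \<subseteq> S" by (auto simp: qpaths_def)
  moreover have "(a,b) \<in> F" using H[rule_format, of 0] by simp
  moreover have "(b,c) \<in> F" using H[rule_format, of 1] by simp
  ultimately show "a \<in> S \<and> b \<in> S \<and> c \<in> S \<and> (a,b) \<in> F \<and> (b,c) \<in> F" by auto
next
  assume h: "a \<in> S \<and> b \<in> S \<and> c \<in> S \<and> (a,b) \<in> F \<and> (b,c) \<in> F"
  have "\<forall>i. Suc i < length [a,b,c] \<longrightarrow> ([a,b,c]!i, [a,b,c]!Suc i) \<in> F"
  proof (intro allI impI)
    fix i assume "Suc i < length [a,b,c]"
    hence "i = 0 \<or> i = 1" by auto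
    thus "([a,b,c]!i, [a,b,c]!Suc i) \<in> F" using h by auto
  qed
  thus "[a,b,c] \<in> qpaths S F" using h by (simp add: qpaths_def)
qed

lemma len3: "length p = 3 \<Longrightarrow> \<exists>a b c. p = [a,b,c]"
  by (auto simp: numeral_3_eq_3 length_Suc_conv)

lemma finite_P3: "finite S \<Longrightarrow> finite {p \<in> qpaths S F. length p = 3}"
  by (rule finite_subset[OF _ finite_lists_length_eq[of S 3]]) (auto simp: qpaths_def)

lemma sum_delta2:
  fixes f :: "'b \<Rightarrow> 'a::field"
  assumes "finite P" "a \<in> P" "b \<in> P"
  shows "(\<Sum>p\<in>P. f p * ((if p = a then 1 else 0) - (if p = b then 1 else 0))) = f a - f b"
proof -
  have "(\<Sum>p\<in>P. f p * ((if p = a then 1 else 0) - (if p = b then 1 else 0)))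
      = (\<Sum>p\<in>P. (if p = a then f p else 0) - (if p = b then f p else 0))"
    by (intro sum.cong) auto
  also have "\<dots> = f a - f b" using assms by (simp add: sum_subtractf sum.delta)
  finally show ?thesis .
qed

definition Rp :: "'s set \<Rightarrow> ('s \<times> 's) set \<Rightarrow> ('s list \<Rightarrow> 'a::field) set \<Rightarrow> ('s list \<Rightarrow> 'a) set" where
  "Rp S E R = {s \<in> carrier (path_ring S (E\<inverse>)). (\<forall>p. s p \<noteq> 0 \<longrightarrow> length p = 3) \<and>
         (\<forall>r\<in>R. (\<Sum>p\<in>{p \<in> qpaths S E. length p = 3}. s (rev p) * r p) = 0)}"

lemma ldual_eq: "ldual (S, E, R) = (S, E\<inverse>, Rp S E R)"
  by (simp add: ldual_def Rp_def)

lemma Rp_diff: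
  assumes s: "s \<in> Rp S E R" and g: "g \<in> Rp S E R"
  shows "(\<lambda>p. s p - c * g p) \<in> Rp S E R"
proof -
  have sub: "{p. s p - c * g p \<noteq> 0} \<subseteq> {p. s p \<noteq> 0} \<union> {p. g p \<noteq> 0}" by auto
  have "finite {p. s p - c * g p \<noteq> 0}"
    using s g by (intro finite_subset[OF sub]) (auto simp: Rp_def path_ring_def)
  moreover have "{p. s p \<noteq> 0} \<subseteq> qpaths S (E\<inverse>)" "{p. g p \<noteq> 0} \<subseteq> qpaths S (E\<inverse>)"
    using s g by (auto simp: Rp_def path_ring_def)
  with sub have "{p. s p - c * g p \<noteq> 0} \<subseteq> qpaths S (E\<inverse>)" by blast
  moreover have "\<forall>p. s p - c * g p \<noteq> 0 \<longrightarrow> length p = 3"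
  proof (intro allI impI)
    fix p assume "s p - c * g p \<noteq> 0"
    hence "s p \<noteq> 0 \<or> g p \<noteq> 0" by auto
    thus "length p = 3" using s g by (auto simp: Rp_def)
  qed
  moreover have "(\<Sum>p\<in>{p \<in> qpaths S E. length p = 3}. (s (rev p) - c * g (rev p)) * r p) = 0"
    if r: "r \<in> R" for r
  proof -
    have "(\<Sum>p\<in>{p \<in> qpaths S E. length p = 3}. (s (rev p) - c * g (rev p)) * r p)
       = (\<Sum>p\<in>{p \<in> qpaths S E. length p = 3}. s (rev p) * r p)
         - c * (\<Sum>p\<in>{p \<in> qpaths S E. length p = 3}. g (rev p) * r p)"
      by (simp add: left_diff_distrib sum_subtractf sum_distrib_left mult.assoc)
    also have "\<dots> = 0" using s g r by (simp add: Rp_def)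
    finally show ?thesis .
  qed
  ultimately show ?thesis by (simp add: Rp_def path_ring_def)
qed

lemma pquiver_neg: "pquiver X (\<lambda>n. - d n) = (pquiver X d)\<inverse>"
  by (auto simp: pquiver_def incid_def)

lemma part1:
  fixes X :: "'v set set" and d :: "nat \<Rightarrow> int"
  assumes finX: "finite X"
  shows "qiso (ldual (A_data X d :: ('v set, 'a::field) qdata)) (B_data X (\<lambda>n. - d n))"
proof -
  define E where "E = pquiver X d"
  define RA :: "('v set list \<Rightarrow> 'a) set" where "RA = snd (snd (A_data X d :: ('v set, 'a) qdata))"
  define GB :: "('v set list \<Rightarrow> 'a) set" where "GB = snd (snd (B_data X (\<lambda>n. - d n) :: ('v set, 'a) qdata))"
  define P3 where "P3 = {p \<in> qpaths X E. length p = 3}"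
  have finP3: "finite P3" unfolding P3_def using finite_P3[OF finX] .
  have Adata: "A_data X d = (X, E, RA)" by (simp add: A_data_def RA_def E_def)
  have Bdata: "B_data X (\<lambda>n. - d n) = (X, E\<inverse>, GB)" by (simp add: B_data_def GB_def E_def pquiver_neg)
  have Emem: "(a, b) \<in> E \<longleftrightarrow> a \<in> X \<and> b \<in> X \<and> incid a b \<and> d (sdim a) = d (sdim b) + 1" for a b
    by (simp add: E_def pquiver_def)
  have incs: "incid a b \<longleftrightarrow> incid b a" for a b :: "'v set" by (auto simp: incid_def)
  have GB_sub: "GB \<subseteq> Rp X E RA"
  proof
    fix g assume "g \<in> GB"
    then obtain D' D1 D2 D'' where g: "g = (\<lambda>p. (if p = [D', D1, D''] then 1 else 0) - (if p = [D', D2, D''] then 1 else 0))"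
      and c: "D' \<in> X" "D1 \<in> X" "D2 \<in> X" "D'' \<in> X"
          "- d (sdim D1) = - d (sdim D'') + 1" "- d (sdim D2) = - d (sdim D'') + 1"
          "- d (sdim D') = - d (sdim D'') + 2"
          "incid D' D1" "incid D1 D''" "incid D' D2" "incid D2 D''"
      unfolding GB_def B_data_def by auto
    have u1: "[D', D1, D''] \<in> qpaths X (E\<inverse>)" using c by (simp add: qpaths3 Emem incs)
    have u2: "[D', D2, D''] \<in> qpaths X (E\<inverse>)" using c by (simp add: qpaths3 Emem incs)
    have r1: "rev [D', D1, D''] \<in> P3" using c by (simp add: P3_def qpaths3 Emem incs)
    have r2: "rev [D', D2, D''] \<in> P3" using c by (simp add: P3_def qpaths3 Emem incs)
    have supp: "{p. g p \<noteq> 0} \<subseteq> {[D', D1, D''], [D', D2, D'']}" by (auto simp: g split: if_splits)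
    have carr: "g \<in> carrier (path_ring X (E\<inverse>))"
      using supp u1 u2 finite_subset[OF supp] by (auto simp: path_ring_def)
    have len: "\<forall>p. g p \<noteq> 0 \<longrightarrow> length p = 3" using supp by auto
    have orth: "(\<Sum>p\<in>P3. g (rev p) * r p) = 0" if r: "r \<in> RA" for r
    proof -
      obtain a b where rab: "r = A_rel X d a b" using r unfolding RA_def A_data_def by auto
      have "(\<Sum>p\<in>P3. g (rev p) * r p) = (\<Sum>p\<in>P3. r p * ((if p = rev [D', D1, D''] then 1 else 0) - (if p = rev [D', D2, D''] then 1 else 0)))"
        by (intro sum.cong) (auto simp: g)
      also have "\<dots> = r (rev [D', D1, D'']) - r (rev [D', D2, D''])"
        using sum_delta2[OF finP3 r1 r2] .
      also have "\<dots> = 0"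
        using c unfolding rab A_rel_def incid_def by auto
      finally show ?thesis .
    qed
    show "g \<in> Rp X E RA" using carr len orth by (simp add: Rp_def P3_def)
  qed
  have step: "\<exists>c g. g \<in> GB \<and> (\<lambda>p. s p - c * g p) \<in> Rp X E RA \<and>
                 {p. s p - c * g p \<noteq> 0} \<subset> {p. s p \<noteq> 0}"
    if s: "s \<in> Rp X E RA" and sn: "s \<noteq> (\<lambda>p. 0)" for s
  proof -
    obtain u where su: "s u \<noteq> 0" using sn by auto
    have sc: "s \<in> carrier (path_ring X (E\<inverse>))" and slen: "\<forall>p. s p \<noteq> 0 \<longrightarrow> length p = 3"
      and sorth: "\<forall>r\<in>RA. (\<Sum>p\<in>P3. s (rev p) * r p) = 0"
      using s by (auto simp: Rp_def P3_def)
    have sq: "\<And>p. s p \<noteq> 0 \<Longrightarrow> p \<in> qpaths X (E\<inverse>)" using sc by (auto simp: path_ring_def)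
    obtain x M y where u: "u = [x, M, y]" using len3 slen su by blast
    have uc: "x \<in> X" "M \<in> X" "y \<in> X" "(M, x) \<in> E" "(y, M) \<in> E" using sq[OF su] by (auto simp: u qpaths3)
    define r where "r = (A_rel X d y x :: 'v set list \<Rightarrow> 'a)"
    have rRA: "r \<in> RA" using uc unfolding r_def RA_def A_data_def
      by (simp, intro exI[of _ y] exI[of _ x]) (auto simp: Emem)
    have ru: "rev u \<in> P3" using uc by (simp add: u P3_def qpaths3)
    have "\<exists>M'. M' \<noteq> M \<and> s [x, M', y] \<noteq> 0"
    proof (rule ccontr)
      assume nex: "\<not> (\<exists>M'. M' \<noteq> M \<and> s [x, M', y] \<noteq> 0)"
      have "s (rev p) * r p = (if p = rev u then s u else 0)" if p: "p \<in> P3" for p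
      proof (cases "p = rev u")
        case True
        have "r (rev u) = 1" using uc by (auto simp: r_def A_rel_def u Emem incs)
        then show ?thesis using True by simp
      next
        case False
        show ?thesis
        proof (cases "r p = 0")
          case False
          then obtain D where pD: "p = [y, D, x]" by (auto simp: r_def A_rel_def split: if_splits)
          have "D \<noteq> M" using \<open>p \<noteq> rev u\<close> by (auto simp: pD u)
          then have "s (rev p) = 0" using nex by (auto simp: pD)
          then show ?thesis using \<open>p \<noteq> rev u\<close> by simp
        qed (use \<open>p \<noteq> rev u\<close> in simp)
      qed
      then have "(\<Sum>p\<in>P3. s (rev p) * r p) = (\<Sum>p\<in>P3. (if p = rev u then s u else 0))"
        by (intro sum.cong) auto
      also have "\<dots> = s u" using finP3 ru by (simp add: sum.delta)
      finally show False using sorth rRA su by simp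
    qed
    then obtain M' where M': "M' \<noteq> M" "s [x, M', y] \<noteq> 0" by blast
    define u' where "u' = [x, M', y]"
    have uc': "M' \<in> X" "(M', x) \<in> E" "(y, M') \<in> E" using sq[OF M'(2)] by (auto simp: qpaths3)
    have uu': "u \<noteq> u'" using M' by (simp add: u u'_def)
    define g where "g = (\<lambda>p. (if p = u then 1 else 0) - (if p = u' then (1::'a) else 0))"
    have gGB: "g \<in> GB"
      unfolding GB_def B_data_def g_def u u'_def using uc uc'
      by (simp, intro exI[of _ x] exI[of _ M] exI[of _ M'] exI[of _ y]) (auto simp: Emem incs)
    have s': "(\<lambda>p. s p - s u * g p) \<in> Rp X E RA" using Rp_diff[OF s] gGB GB_sub by blast
    have "{p. s p - s u * g p \<noteq> 0} \<subseteq> {p. s p \<noteq> 0} - {u}"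
      using uu' M'(2) by (auto simp: g_def u'_def split: if_splits)
    then have "{p. s p - s u * g p \<noteq> 0} \<subset> {p. s p \<noteq> 0}" using su by blast
    then show ?thesis using gGB s' by blast
  qed
  have Rpc: "Rp X E RA \<subseteq> carrier (path_ring X (E\<inverse>))" by (auto simp: Rp_def)
  have "genideal (path_ring X (E\<inverse>)) (Rp X E RA) = genideal (path_ring X (E\<inverse>)) GB"
    by (rule genideal_eq_by_reduction[OF finX Rpc GB_sub step])
  then show ?thesis
    by (intro qiso_of_eq) (simp_all add: Adata Bdata ldual_eq qring_def qideal_def)
qed

lemma part2:
  fixes X :: "'v set set" and d :: "nat \<Rightarrow> int"
  assumes finX: "finite X"
  shows "qiso (ldual (B_data X d :: ('v set, 'a::field) qdata)) (A_data X (\<lambda>n. - d n))"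
proof -
  define E where "E = pquiver X d"
  define RB :: "('v set list \<Rightarrow> 'a) set" where "RB = snd (snd (B_data X d :: ('v set, 'a) qdata))"
  define GA :: "('v set list \<Rightarrow> 'a) set" where "GA = snd (snd (A_data X (\<lambda>n. - d n) :: ('v set, 'a) qdata))"
  define P3 where "P3 = {p \<in> qpaths X E. length p = 3}"
  have finP3: "finite P3" unfolding P3_def using finite_P3[OF finX] .
  have Bdata: "B_data X d = (X, E, RB)" by (simp add: B_data_def RB_def E_def)
  have Adata: "A_data X (\<lambda>n. - d n) = (X, E\<inverse>, GA)" by (simp add: A_data_def GA_def E_def pquiver_neg)
  have Emem: "(a, b) \<in> E \<longleftrightarrow> a \<in> X \<and> b \<in> X \<and> incid a b \<and> d (sdim a) = d (sdim b) + 1" for a b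
    by (simp add: E_def pquiver_def)
  have incs: "incid a b \<longleftrightarrow> incid b a" for a b :: "'v set" by (auto simp: incid_def)
  have RBform: "\<exists>D' D1 D2 D''. b = (\<lambda>p. (if p = [D', D1, D''] then 1 else 0) - (if p = [D', D2, D''] then 1 else 0))
      \<and> [D', D1, D''] \<in> P3 \<and> [D', D2, D''] \<in> P3
      \<and> D1 \<in> X \<and> D2 \<in> X \<and> d (sdim D1) = d (sdim D'') + 1 \<and> d (sdim D2) = d (sdim D'') + 1
      \<and> d (sdim D') = d (sdim D'') + 2 \<and> incid D' D1 \<and> incid D1 D'' \<and> incid D' D2 \<and> incid D2 D''"
    if b: "b \<in> RB" for b
  proof -
    obtain D' D1 D2 D'' where g: "b = (\<lambda>p. (if p = [D', D1, D''] then 1 else 0) - (if p = [D', D2, D''] then 1 else 0))"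
      and c: "D' \<in> X" "D1 \<in> X" "D2 \<in> X" "D'' \<in> X"
          "d (sdim D1) = d (sdim D'') + 1" "d (sdim D2) = d (sdim D'') + 1"
          "d (sdim D') = d (sdim D'') + 2"
          "incid D' D1" "incid D1 D''" "incid D' D2" "incid D2 D''"
      using b unfolding RB_def B_data_def by auto
    have "[D', D1, D''] \<in> P3" "[D', D2, D''] \<in> P3" using c by (simp_all add: P3_def qpaths3 Emem)
    then show ?thesis using g c by blast
  qed
  have GA_sub: "GA \<subseteq> Rp X E RB"
  proof
    fix r assume "r \<in> GA"
    then obtain a c where rac: "r = A_rel X (\<lambda>n. - d n) a c" and ac: "a \<in> X" "c \<in> X"
        "- d (sdim a) = - d (sdim c) + 2"
      unfolding GA_def A_data_def by auto
    have supp: "{p. r p \<noteq> 0} \<subseteq> (\<lambda>D. [a, D, c]) ` X"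
      by (auto simp: rac A_rel_def split: if_splits)
    have supq: "{p. r p \<noteq> 0} \<subseteq> qpaths X (E\<inverse>)"
      using ac by (auto simp: rac A_rel_def qpaths3 Emem incs split: if_splits)
    have carr: "r \<in> carrier (path_ring X (E\<inverse>))"
      using supq finite_subset[OF supp] finX by (auto simp: path_ring_def)
    have len: "\<forall>p. r p \<noteq> 0 \<longrightarrow> length p = 3" using supp by auto
    have orth: "(\<Sum>p\<in>P3. r (rev p) * b p) = 0" if b: "b \<in> RB" for b
    proof -
      obtain D' D1 D2 D'' where g: "b = (\<lambda>p. (if p = [D', D1, D''] then 1 else 0) - (if p = [D', D2, D''] then 1 else 0))"
        and P: "[D', D1, D''] \<in> P3" "[D', D2, D''] \<in> P3"
        and c: "D1 \<in> X" "D2 \<in> X" "d (sdim D1) = d (sdim D'') + 1" "d (sdim D2) = d (sdim D'') + 1"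
          "d (sdim D') = d (sdim D'') + 2" "incid D' D1" "incid D1 D''" "incid D' D2" "incid D2 D''"
        using RBform[OF b] by blast
      have "(\<Sum>p\<in>P3. r (rev p) * b p) = r (rev [D', D1, D'']) - r (rev [D', D2, D''])"
        unfolding g using sum_delta2[OF finP3 P, of "\<lambda>p. r (rev p)"] by simp
      also have "\<dots> = 0"
        using c unfolding rac A_rel_def incid_def by auto
      finally show ?thesis .
    qed
    show "r \<in> Rp X E RB" using carr len orth by (simp add: Rp_def P3_def)
  qed
  have step: "\<exists>c g. g \<in> GA \<and> (\<lambda>p. s p - c * g p) \<in> Rp X E RB \<and>
                 {p. s p - c * g p \<noteq> 0} \<subset> {p. s p \<noteq> 0}"
    if s: "s \<in> Rp X E RB" and sn: "s \<noteq> (\<lambda>p. 0)" for s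
  proof -
    obtain u where su: "s u \<noteq> 0" using sn by auto
    have sc: "s \<in> carrier (path_ring X (E\<inverse>))" and slen: "\<forall>p. s p \<noteq> 0 \<longrightarrow> length p = 3"
      and sorth: "\<forall>b\<in>RB. (\<Sum>p\<in>P3. s (rev p) * b p) = 0"
      using s by (auto simp: Rp_def P3_def)
    have sq: "\<And>p. s p \<noteq> 0 \<Longrightarrow> p \<in> qpaths X (E\<inverse>)" using sc by (auto simp: path_ring_def)
    obtain x M y where u: "u = [x, M, y]" using len3 slen su by blast
    have uc: "x \<in> X" "M \<in> X" "y \<in> X" "(M, x) \<in> E" "(y, M) \<in> E" using sq[OF su] by (auto simp: u qpaths3)
    define r where "r = (A_rel X (\<lambda>n. - d n) x y :: 'v set list \<Rightarrow> 'a)"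
    have rGA: "r \<in> GA" using uc unfolding r_def GA_def A_data_def
      by (simp, intro exI[of _ x] exI[of _ y]) (auto simp: Emem)
    have ru: "r u = 1" using uc by (auto simp: r_def A_rel_def u Emem incs)
    have const: "s p = s u" if rp: "r p \<noteq> 0" for p
    proof -
      obtain D where pD: "p = [x, D, y]" and D: "D \<in> X" "- d (sdim D) = - d (sdim y) + 1"
          "incid x D" "incid D y"
        using rp by (auto simp: r_def A_rel_def split: if_splits)
      define b where "b = (\<lambda>p. (if p = [y, D, x] then 1 else 0) - (if p = [y, M, x] then (1::'a) else 0))"
      have bRB: "b \<in> RB" using uc D unfolding RB_def B_data_def b_def
        by (simp, intro exI[of _ y] exI[of _ D] exI[of _ M] exI[of _ x]) (auto simp: Emem incs)
      have P: "[y, D, x] \<in> P3" "[y, M, x] \<in> P3" using uc D by (auto simp: P3_def qpaths3 Emem incs)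
      have "(\<Sum>p\<in>P3. s (rev p) * b p) = s (rev [y, D, x]) - s (rev [y, M, x])"
        unfolding b_def using sum_delta2[OF finP3 P, of "\<lambda>p. s (rev p)"] by simp
      then have "s [x, D, y] = s [x, M, y]" using sorth bRB by simp
      then show ?thesis by (simp add: pD u)
    qed
    have s': "(\<lambda>p. s p - s u * r p) \<in> Rp X E RB" using Rp_diff[OF s] rGA GA_sub by blast
    have "{p. s p - s u * r p \<noteq> 0} \<subseteq> {p. s p \<noteq> 0} - {u}"
    proof
      fix p assume p: "p \<in> {p. s p - s u * r p \<noteq> 0}"
      have r01: "r p = 0 \<or> r p = 1" by (simp add: r_def A_rel_def)
      show "p \<in> {p. s p \<noteq> 0} - {u}"
      proof (cases "r p = 0")
        case True
        then show ?thesis using p ru by auto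
      next
        case False
        then have "r p = 1" using r01 by simp
        then show ?thesis using p const[OF False] by simp
      qed
    qed
    then have "{p. s p - s u * r p \<noteq> 0} \<subset> {p. s p \<noteq> 0}" using su by blast
    then show ?thesis using rGA s' by blast
  qed
  have Rpc: "Rp X E RB \<subseteq> carrier (path_ring X (E\<inverse>))" by (auto simp: Rp_def)
  have "genideal (path_ring X (E\<inverse>)) (Rp X E RB) = genideal (path_ring X (E\<inverse>)) GA"
    by (rule genideal_eq_by_reduction[OF finX Rpc GA_sub step])
  then show ?thesis
    by (intro qiso_of_eq) (simp_all add: Adata Bdata ldual_eq qring_def qideal_def)
qed

theorem lemma4p2p3:
  fixes X :: "'v set set" and \<delta> :: "nat \<Rightarrow> int"
  assumes "simplicial_complex X" and "finite X" and "sc_connected X"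
    and "cellular_perversity \<delta>"
  shows "qiso (ldual (A_data X \<delta> :: ('v set, 'a::field_char_0) qdata)) (B_data X (\<lambda>n. - \<delta> n)) \<and>
         qiso (ldual (B_data X \<delta> :: ('v set, 'a::field_char_0) qdata)) (A_data X (\<lambda>n. - \<delta> n))"
  using part1[OF assms(2)] part2[OF assms(2)] by blast

end
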